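(* Let $F,G\in\mathbb R^{n\times n}$ with $F$ Hurwitz. Then there exist $h_M>0$ and $\kappa>0$, together with symmetric positive definite $P_1,Q$ and matrices $P_2,P_3\in\mathbb R^{n\times n}$, such that $\Theta(h_M,0)\prec0$ and $\Theta(h_M,\kappa)\prec0$.
   Context: For $h_M>0$, $\kappa\ge0$ and matrices $P_1,Q,P_2,P_3$, define $$\Theta(h_M,\kappa)=\begin{bmatrix}2\kappa P_1+F^\top P_2+P_2^\top F& P_1-P_2^\top+F^\top P_3& h_MP_2^\top G\\ P_1-P_2+P_3^\top F& -P_3-P_3^\top+h_MQ& h_MP_3^\top G\\ h_MG^\top P_2& h_MG^\top P_3& -h_Me^{-2\kappa h_M}Q\end{bmatrix}.$$ The notation $\prec0$ means negative definite. *)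

theory Defs
  imports "HOL-Analysis.Analysis"
begin

definition cmat :: "real^'n^'n \<Rightarrow> complex^'n^'n" where
  "cmat A = (\<chi> i j. complex_of_real (A $ i $ j))"

definition hurwitz :: "real^'n^'n \<Rightarrow> bool" where
  "hurwitz F \<longleftrightarrow> (\<forall>z::complex. det (mat z - cmat F) = 0 \<longrightarrow> Re z < 0)"

definition sym_mat :: "real^'m^'m \<Rightarrow> bool" where
  "sym_mat A \<longleftrightarrow> transpose A = A"

definition pos_def :: "real^'m^'m \<Rightarrow> bool" where
  "pos_def A \<longleftrightarrow> sym_mat A \<and> (\<forall>x. x \<noteq> 0 \<longrightarrow> x \<bullet> (A *v x) > 0)"

definition neg_def :: "real^'m^'m \<Rightarrow> bool" where
  "neg_def A \<longleftrightarrow> sym_mat A \<and> (\<forall>x. x \<noteq> 0 \<longrightarrow> x \<bullet> (A *v x) < 0)"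

definition blk3 ::
  "real^'n^'n \<Rightarrow> real^'n^'n \<Rightarrow> real^'n^'n \<Rightarrow>
   real^'n^'n \<Rightarrow> real^'n^'n \<Rightarrow> real^'n^'n \<Rightarrow>
   real^'n^'n \<Rightarrow> real^'n^'n \<Rightarrow> real^'n^'n \<Rightarrow> real^('n + ('n + 'n))^('n + ('n + 'n))" where
  "blk3 A11 A12 A13 A21 A22 A23 A31 A32 A33 = (\<chi> i j.
     (case i of
        Inl a \<Rightarrow> (case j of Inl b \<Rightarrow> A11$a$b | Inr (Inl b) \<Rightarrow> A12$a$b | Inr (Inr b) \<Rightarrow> A13$a$b)
      | Inr (Inl a) \<Rightarrow> (case j of Inl b \<Rightarrow> A21$a$b | Inr (Inl b) \<Rightarrow> A22$a$b | Inr (Inr b) \<Rightarrow> A23$a$b)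
      | Inr (Inr a) \<Rightarrow> (case j of Inl b \<Rightarrow> A31$a$b | Inr (Inl b) \<Rightarrow> A32$a$b | Inr (Inr b) \<Rightarrow> A33$a$b)))"

definition Theta ::
  "real^'n^'n \<Rightarrow> real^'n^'n \<Rightarrow> real^'n^'n \<Rightarrow> real^'n^'n \<Rightarrow> real^'n^'n \<Rightarrow> real^'n^'n
   \<Rightarrow> real \<Rightarrow> real \<Rightarrow> real^('n + ('n + 'n))^('n + ('n + 'n))" where
  "Theta F G P1 Q P2 P3 hM \<kappa> = blk3
     ((2 * \<kappa>) *\<^sub>R P1 + transpose F ** P2 + transpose P2 ** F)
     (P1 - transpose P2 + transpose F ** P3)
     (hM *\<^sub>R (transpose P2 ** G))
     (P1 - P2 + transpose P3 ** F)
     (- P3 - transpose P3 + hM *\<^sub>R Q)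
     (hM *\<^sub>R (transpose P3 ** G))
     (hM *\<^sub>R (transpose G ** P2))
     (hM *\<^sub>R (transpose G ** P3))
     ((- hM * exp (-2 * \<kappa> * hM)) *\<^sub>R Q)"

end

theory Submission
  imports Defs "Jordan_Normal_Form.Schur_Decomposition"
begin


definition idx :: "'n::finite \<Rightarrow> nat" where
  "idx = (SOME h. bij_betw h (UNIV::'n set) {0..<CARD('n)})"

lemma idx_bij: "bij_betw (idx::'n::finite\<Rightarrow>nat) UNIV {0..<CARD('n)}"
proof -
  have "\<exists>h. bij_betw h (UNIV::'n set) {0..<CARD('n)}"
    using ex_bij_betw_finite_nat[of "UNIV::'n set"] by simp
  then show ?thesis unfolding idx_def by (rule someI_ex)
qed

lemma idx_inj: "idx (a::'n::finite) = idx b \<longleftrightarrow> a = b"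
  using idx_bij[where 'n='n] by (auto simp: bij_betw_def inj_on_def)

lemma idx_lt: "idx (a::'n::finite) < CARD('n)"
  using idx_bij[where 'n='n] by (auto simp: bij_betw_def)

definition idxinv :: "nat \<Rightarrow> 'n::finite" where
  "idxinv = inv_into UNIV idx"

lemma idx_idxinv: "i < CARD('n) \<Longrightarrow> idx (idxinv i :: 'n::finite) = i"
  unfolding idxinv_def using idx_bij[where 'n='n]
  by (simp add: bij_betw_inv_into_right)

lemma idxinv_idx: "idxinv (idx (a::'n::finite)) = a"
  unfolding idxinv_def using idx_bij[where 'n='n]
  by (meson bij_betw_inv_into_left UNIV_I)

lemma sum_idx: "(\<Sum>k\<in>{0..<CARD('n)}. f k) = (\<Sum>c\<in>(UNIV::'n::finite set). f (idx c))"
  using sum.reindex_bij_betw[OF idx_bij[where 'n='n], of f] by simp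

definition toJ :: "'a^'n^'n \<Rightarrow> 'a mat" where
  "toJ M = Matrix.mat CARD('n::finite) CARD('n) (\<lambda>(i,j). M $ idxinv i $ idxinv j)"

definition fromJ :: "'a mat \<Rightarrow> 'a^'n::finite^'n" where
  "fromJ A = (\<chi> a b. A $$ (idx a, idx b))"

definition fromJv :: "'a Matrix.vec \<Rightarrow> 'a^'n::finite" where
  "fromJv v = (\<chi> a. vec_index v (idx a))"

lemma toJ_carrier: "toJ (M::'a^'n::finite^'n) \<in> carrier_mat CARD('n) CARD('n)"
  unfolding toJ_def by simp

lemma fromJ_toJ: "fromJ (toJ (M::'a^'n::finite^'n)) = M"
  unfolding fromJ_def toJ_def by (simp add: idx_lt idxinv_idx vec_eq_iff)

lemma fromJ_mult:
  fixes A B :: "'a::comm_ring_1 mat"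
  assumes "A \<in> carrier_mat CARD('n::finite) CARD('n)" "B \<in> carrier_mat CARD('n) CARD('n)"
  shows "(fromJ (A * B) :: 'a^'n^'n) = fromJ A ** fromJ B"
  using assms
  by (simp add: fromJ_def matrix_matrix_mult_def vec_eq_iff idx_lt index_mult_mat
      scalar_prod_def sum_idx)

lemma fromJ_one: "(fromJ (1\<^sub>m CARD('n)) :: 'a::comm_ring_1^'n::finite^'n) = Finite_Cartesian_Product.mat 1"
  by (simp add: fromJ_def vec_eq_iff idx_lt idx_inj Finite_Cartesian_Product.mat_def)

lemma fromJv_mult:
  fixes A :: "'a::comm_ring_1 mat"
  assumes "A \<in> carrier_mat CARD('n::finite) CARD('n)" "v \<in> carrier_vec CARD('n)"
  shows "(fromJv (A *\<^sub>v v) :: 'a^'n) = fromJ A *v fromJv v"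
  using assms
  by (simp add: fromJ_def fromJv_def matrix_vector_mult_def vec_eq_iff idx_lt
      scalar_prod_def sum_idx)

lemma fromJv_smult: "v \<in> carrier_vec CARD('n::finite) \<Longrightarrow> (fromJv (e \<cdot>\<^sub>v v) :: 'a::comm_ring_1^'n) = e *s fromJv v"
  unfolding Finite_Cartesian_Product.vec_eq_iff by (simp add: fromJv_def idx_lt)

lemma fromJv_zero:
  assumes "v \<in> carrier_vec CARD('n::finite)" "(fromJv v :: 'a::zero^'n) = 0"
  shows "v = 0\<^sub>v CARD('n)"
proof (rule eq_vecI)
  fix i assume i: "i < dim_vec (0\<^sub>v CARD('n) :: 'a Matrix.vec)"
  have "(fromJv v :: 'a^'n) $ (idxinv i) = 0"
    using assms(2) by simp
  then have "vec_index v (idx (idxinv i :: 'n)) = 0"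
    unfolding fromJv_def by simp
  then show "vec_index v i = vec_index (0\<^sub>v CARD('n)) i" using i idx_idxinv[where 'n='n, of i] by simp
qed (use assms in auto)

lemma schur_n:
  fixes A :: "complex^'n::finite^'n"
  shows "\<exists>S B T::complex^'n^'n. A = S ** B ** T \<and> S ** T = Finite_Cartesian_Product.mat 1 \<and>
     T ** S = Finite_Cartesian_Product.mat 1 \<and> (\<forall>a b. idx b < idx a \<longrightarrow> B$a$b = 0) \<and>
     (\<forall>a. \<exists>v. v \<noteq> 0 \<and> A *v v = B$a$a *s v)"
proof -
  define n where "n = CARD('n)"
  define A' where "A' = toJ A"
  have A': "A' \<in> carrier_mat n n" unfolding A'_def n_def by (rule toJ_carrier)
  obtain es where cp: "char_poly A' = (\<Prod>a\<leftarrow>es. [:- a, 1:])"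
    using char_poly_factorized[OF A'] by blast
  obtain B P Q where sd: "schur_decomposition A' es = (B,P,Q)"
    by (cases "schur_decomposition A' es") auto
  from schur_decomposition[OF A' cp sd] have sim: "similar_mat_wit A' B P Q"
    and ut: "upper_triangular B" and dg: "diag_mat B = es" by auto
  from sim A' have P: "P \<in> carrier_mat n n" and B: "B \<in> carrier_mat n n"
    and Q: "Q \<in> carrier_mat n n" and PQ: "P * Q = 1\<^sub>m n" and QP: "Q * P = 1\<^sub>m n"
    and AA: "A' = P * B * Q"
    unfolding similar_mat_wit_def Let_def by auto
  have PB: "P * B \<in> carrier_mat n n" using P B by simp
  have 1: "A = fromJ P ** fromJ B ** fromJ Q"
  proof -
    have "A = fromJ A'" unfolding A'_def by (simp add: fromJ_toJ)
    also have "\<dots> = fromJ (P * B) ** fromJ Q" unfolding AA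
      using fromJ_mult[OF PB[unfolded n_def] Q[unfolded n_def]] by simp
    also have "\<dots> = fromJ P ** fromJ B ** fromJ Q"
      using fromJ_mult[OF P[unfolded n_def] B[unfolded n_def]] by simp
    finally show ?thesis .
  qed
  have 2: "fromJ P ** fromJ Q = (Finite_Cartesian_Product.mat 1 :: complex^'n^'n)"
    using fromJ_mult[OF P[unfolded n_def] Q[unfolded n_def]] PQ fromJ_one unfolding n_def by metis
  have 3: "fromJ Q ** fromJ P = (Finite_Cartesian_Product.mat 1 :: complex^'n^'n)"
    using fromJ_mult[OF Q[unfolded n_def] P[unfolded n_def]] QP fromJ_one unfolding n_def by metis
  have 4: "\<forall>a b. idx b < idx a \<longrightarrow> (fromJ B :: complex^'n^'n)$a$b = 0"
    using ut B idx_lt[where 'n='n] unfolding upper_triangular_def fromJ_def n_def by auto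
  have 5: "\<exists>v. v \<noteq> 0 \<and> A *v v = (fromJ B :: complex^'n^'n)$a$a *s v" for a
  proof -
    define e where "e = B $$ (idx a, idx a)"
    have ia: "idx a < n" using idx_lt unfolding n_def by auto
    have "e \<in> set es" unfolding dg[symmetric] diag_mat_def e_def using B ia by auto
    then have "poly (char_poly A') e = 0" unfolding cp
      by (simp add: poly_prod_list prod_list_zero_iff)
    then have "eigenvalue A' e" using eigenvalue_root_char_poly[OF A'] by simp
    then obtain v where ev: "eigenvector A' v e" unfolding eigenvalue_def by blast
    then have v: "v \<in> carrier_vec n" and v0: "v \<noteq> 0\<^sub>v n" and Av: "A' *\<^sub>v v = e \<cdot>\<^sub>v v"
      unfolding eigenvector_def using A' by auto
    define w where "w = (fromJv v :: complex^'n)"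
    have "w \<noteq> 0" using fromJv_zero[where 'n='n, OF v[unfolded n_def]] v0 unfolding w_def n_def by blast
    moreover have "A *v w = e *s w"
    proof -
      have "A *v w = fromJ A' *v fromJv v" unfolding w_def A'_def by (simp add: fromJ_toJ)
      also have "\<dots> = fromJv (A' *\<^sub>v v)"
        using fromJv_mult[OF A'[unfolded n_def] v[unfolded n_def]] by simp
      also have "\<dots> = e *s w" unfolding Av w_def using fromJv_smult v unfolding n_def by blast
      finally show ?thesis .
    qed
    moreover have "(fromJ B :: complex^'n^'n)$a$a = e" unfolding fromJ_def e_def by simp
    ultimately show ?thesis by metis
  qed
  show ?thesis
  proof -
    define S' :: "complex^'n^'n" where "S' = fromJ P"
    define B' :: "complex^'n^'n" where "B' = fromJ B"
    define T' :: "complex^'n^'n" where "T' = fromJ Q"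
    have "A = S' ** B' ** T' \<and> S' ** T' = Finite_Cartesian_Product.mat 1 \<and>
     T' ** S' = Finite_Cartesian_Product.mat 1 \<and> (\<forall>a b. idx b < idx a \<longrightarrow> B'$a$b = 0) \<and>
     (\<forall>a. \<exists>v. v \<noteq> 0 \<and> A *v v = B'$a$a *s v)"
      unfolding S'_def B'_def T'_def using 1 2 3 4 5 by blast
    then show ?thesis by blast
  qed
qed




lemma norm_sq_cart: "(norm (v::'a::real_normed_vector^'n::finite))^2 = (\<Sum>a\<in>UNIV. (norm (v$a))^2)"
  by (simp add: norm_vec_def L2_set_def sum_nonneg)

lemma mat_smult_vec: "(Finite_Cartesian_Product.mat z :: 'a::comm_ring_1^'n::finite^'n) *v v = z *s v"
  unfolding Finite_Cartesian_Product.vec_eq_iff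
  by (simp add: matrix_vector_mult_def Finite_Cartesian_Product.mat_def if_distrib if_distribR cong: if_cong)

lemma eigen_hurwitz:
  fixes F :: "real^'n::finite^'n"
  assumes "hurwitz F" "v \<noteq> 0" "cmat F *v v = z *s v"
  shows "Re z < 0"
proof -
  let ?M = "Finite_Cartesian_Product.mat z - cmat F"
  have Mv: "?M *v v = 0"
    using assms(3) by (simp add: matrix_vector_mult_diff_rdistrib mat_smult_vec)
  have "Determinants.det ?M = 0"
  proof (rule ccontr)
    assume "Determinants.det ?M \<noteq> 0"
    then have "invertible ?M" by (simp add: invertible_det_nz)
    then obtain Mi where Mi: "Mi ** ?M = Finite_Cartesian_Product.mat 1"
      unfolding invertible_def by blast
    have "v = Mi *v (?M *v v)" by (simp add: matrix_vector_mul_assoc Mi)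
    then show False using Mv assms(2) by simp
  qed
  then show ?thesis using assms(1) unfolding hurwitz_def by blast
qed

lemma quad_bound:
  fixes C :: "complex^'n::finite^'n" and y :: "complex^'n"
  assumes diag: "\<And>a. Re (C$a$a) \<le> - \<alpha>" and off: "\<And>a b. a \<noteq> b \<Longrightarrow> cmod (C$a$b) \<le> \<beta>"
    and small: "\<beta> * CARD('n) \<le> \<alpha> / 2" and b0: "\<beta> \<ge> 0"
  shows "(\<Sum>a\<in>UNIV. \<Sum>b\<in>UNIV. Re (cnj (y$a) * C$a$b * y$b)) \<le> - (\<alpha>/2) * (\<Sum>a\<in>UNIV. (cmod (y$a))^2)"
proof -
  define S where "S = (\<Sum>a\<in>UNIV. (cmod (y$a))^2)"
  define N where "N = real CARD('n)"
  have row: "(\<Sum>b\<in>UNIV. Re (cnj (y$a) * C$a$b * y$b)) \<le> - \<alpha> * (cmod (y$a))^2 + \<beta>/2 * (N * (cmod (y$a))^2 + S)" for a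
  proof -
    define f where "f b = Re (cnj (y$a) * C$a$b * y$b)" for b
    define g where "g b = \<beta>/2 * ((cmod (y$a))^2 + (cmod (y$b))^2)" for b
    have fa: "f a \<le> - \<alpha> * (cmod (y$a))^2"
    proof -
      have "f a = Re (C$a$a) * (cmod (y$a))^2" unfolding f_def cmod_power2
        by (simp add: algebra_simps power2_eq_square)
      also have "\<dots> \<le> - \<alpha> * (cmod (y$a))^2" by (rule mult_right_mono[OF diag]) simp
      finally show ?thesis .
    qed
    have fb: "f b \<le> g b" if "b \<noteq> a" for b
    proof -
      have "f b \<le> cmod (cnj (y$a) * C$a$b * y$b)" unfolding f_def by (rule complex_Re_le_cmod)
      also have "\<dots> = cmod (C$a$b) * (cmod (y$a) * cmod (y$b))" by (simp add: norm_mult)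
      also have "\<dots> \<le> \<beta> * (cmod (y$a) * cmod (y$b))"
        by (rule mult_right_mono[OF off]) (use that in auto)
      also have "\<dots> \<le> g b" unfolding g_def
      proof -
        have "2 * (cmod (y$a) * cmod (y$b)) \<le> (cmod (y$a))^2 + (cmod (y$b))^2"
          using sum_squares_bound[of "cmod (y$a)" "cmod (y$b)"] by (simp add: power2_eq_square)
        from mult_left_mono[OF this b0]
        show "\<beta> * (cmod (y$a) * cmod (y$b)) \<le> \<beta>/2 * ((cmod (y$a))^2 + (cmod (y$b))^2)"
          by (simp add: field_simps)
      qed
      finally show ?thesis .
    qed
    have g0: "g b \<ge> 0" for b unfolding g_def using b0 by simp
    have "(\<Sum>b\<in>UNIV. f b) = f a + (\<Sum>b\<in>UNIV - {a}. f b)"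
      by (simp add: sum.remove)
    also have "(\<Sum>b\<in>UNIV - {a}. f b) \<le> (\<Sum>b\<in>UNIV - {a}. g b)"
      by (rule sum_mono) (use fb in auto)
    also have "\<dots> \<le> (\<Sum>b\<in>UNIV. g b)" by (rule sum_mono2) (use g0 in auto)
    also have "(\<Sum>b\<in>UNIV. g b) = \<beta>/2 * (\<Sum>b\<in>UNIV. (cmod (y$a))^2 + (cmod (y$b))^2)"
      unfolding g_def by (rule sum_distrib_left[symmetric])
    also have "\<dots> = \<beta>/2 * (N * (cmod (y$a))^2 + S)"
      unfolding S_def N_def by (simp add: sum.distrib)
    finally show ?thesis using fa unfolding f_def by linarith
  qed
  have "(\<Sum>a\<in>UNIV. \<Sum>b\<in>UNIV. Re (cnj (y$a) * C$a$b * y$b))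
      \<le> (\<Sum>a\<in>UNIV. - \<alpha> * (cmod (y$a))^2 + \<beta>/2 * (N * (cmod (y$a))^2 + S))"
    by (rule sum_mono) (rule row)
  also have "\<dots> = (\<Sum>a\<in>UNIV. (\<beta>/2*N - \<alpha>) * (cmod (y$a))^2) + (\<Sum>a\<in>(UNIV::'n set). \<beta>/2*S)"
    by (simp only: sum.distrib[symmetric]) (simp add: algebra_simps)
  also have "\<dots> = (\<beta>/2*N - \<alpha>) * S + N * (\<beta>/2*S)"
    unfolding S_def N_def by (simp add: sum_distrib_left[symmetric])
  also have "\<dots> = - \<alpha> * S + \<beta> * N * S" by (simp add: algebra_simps)
  also have "\<dots> \<le> - (\<alpha>/2) * S"
  proof -
    have "S \<ge> 0" unfolding S_def by (simp add: sum_nonneg)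
    then have "(\<beta> * N) * S \<le> (\<alpha>/2) * S" using small unfolding N_def by (rule mult_right_mono[rotated])
    then show ?thesis by simp
  qed
  finally show ?thesis unfolding S_def .
qed




lemma Re_term: "Re (cnj (k1 * complex_of_real x1) * (k2 * complex_of_real w1)) = x1 * Re (cnj k1 * k2) * w1"
  by (simp add: algebra_simps)

lemma re_cnj_sq: "Re (cnj z * z) = (cmod z)^2"
  unfolding cmod_power2 by (simp add: power2_eq_square)

lemma frac_aux: "(dc::real) \<noteq> 0 \<Longrightarrow> b * complex_of_real dc / x * (t / complex_of_real dc) = b * t / (x::complex)"
  by simp

lemma key_ident:
  fixes K :: "complex^'n::finite^'n" and x w :: "real^'n"
  shows "x \<bullet> ((\<chi> i j. Re (\<Sum>a\<in>UNIV. cnj (K$a$i) * K$a$j)) *v w) =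
    (\<Sum>a\<in>UNIV. Re (cnj ((K *v (\<chi> a. complex_of_real (x$a)))$a) * (K *v (\<chi> a. complex_of_real (w$a)))$a))"
proof -
  have "x \<bullet> ((\<chi> i j. Re (\<Sum>a\<in>UNIV. cnj (K$a$i) * K$a$j)) *v w) =
     (\<Sum>i\<in>UNIV. \<Sum>j\<in>UNIV. \<Sum>a\<in>UNIV. x$i * (Re (cnj (K$a$i) * K$a$j) * w$j))"
    by (simp only: inner_vec_def inner_real_def matrix_vector_mult_def vec_lambda_beta Re_sum
       sum_distrib_left sum_distrib_right mult.assoc)
  also have "\<dots> = (\<Sum>i\<in>UNIV. \<Sum>a\<in>UNIV. \<Sum>j\<in>UNIV. x$i * (Re (cnj (K$a$i) * K$a$j) * w$j))"
    by (rule sum.cong[OF refl], rule sum.swap)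
  also have "\<dots> = (\<Sum>a\<in>UNIV. \<Sum>i\<in>UNIV. \<Sum>j\<in>UNIV. x$i * (Re (cnj (K$a$i) * K$a$j) * w$j))"
    by (rule sum.swap)
  also have "\<dots> = (\<Sum>a\<in>UNIV. Re (cnj ((K *v (\<chi> a. complex_of_real (x$a)))$a) * (K *v (\<chi> a. complex_of_real (w$a)))$a))"
    by (simp only: matrix_vector_mult_def vec_lambda_beta cnj_sum sum_product Re_sum Re_term mult.assoc)
  finally show ?thesis .
qed

lemma lyap:
  fixes F :: "real^'n::finite^'n"
  assumes hw: "hurwitz F"
  shows "\<exists>P c. sym_mat P \<and> (\<forall>x. x \<noteq> 0 \<longrightarrow> x \<bullet> (P *v x) > 0) \<and> c > 0 \<and>
           (\<forall>x. x \<bullet> (P *v (F *v x)) \<le> - c * (norm x)^2)"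
proof -
  obtain S B T :: "complex^'n^'n" where FS: "cmat F = S ** B ** T"
    and ST: "S ** T = Finite_Cartesian_Product.mat 1" and TS: "T ** S = Finite_Cartesian_Product.mat 1"
    and tri: "\<forall>a b. idx b < idx a \<longrightarrow> B$a$b = 0"
    and ev: "\<forall>a. \<exists>v. v \<noteq> 0 \<and> cmat F *v v = B$a$a *s v"
    using schur_n[of "cmat F"] by blast
  have reB: "Re (B$a$a) < 0" for a using ev eigen_hurwitz[OF hw] by blast
  define \<alpha> where "\<alpha> = Min (range (\<lambda>a. - Re (B$a$a)))"
  have \<alpha>0: "\<alpha> > 0" unfolding \<alpha>_def using reB by (subst Min_gr_iff) auto
  have \<alpha>le: "Re (B$a$a) \<le> - \<alpha>" for a
  proof -
    have "\<alpha> \<le> - Re (B$a$a)" unfolding \<alpha>_def by (rule Min_le) auto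
    then show ?thesis by simp
  qed
  define M0 where "M0 = (\<Sum>a\<in>UNIV. \<Sum>b\<in>UNIV. cmod (B$a$b))"
  have M0: "cmod (B$a$b) \<le> M0" for a b
  proof -
    have "cmod (B$a$b) \<le> (\<Sum>b\<in>UNIV. cmod (B$a$b))" by (rule member_le_sum) auto
    also have "\<dots> \<le> M0" unfolding M0_def by (rule member_le_sum[of a UNIV "\<lambda>a. \<Sum>b\<in>UNIV. cmod (B$a$b)"]) (auto simp: sum_nonneg)
    finally show ?thesis .
  qed
  have M00: "M0 \<ge> 0" unfolding M0_def by (simp add: sum_nonneg)
  define N where "N = real CARD('n)"
  have N0: "N > 0" unfolding N_def by simp
  define \<delta> where "\<delta> = min 1 (\<alpha> / (2 * N * (M0 + 1)))"
  have \<delta>0: "\<delta> > 0" unfolding \<delta>_def using \<alpha>0 N0 M00 by simp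
  have \<delta>1: "\<delta> \<le> 1" unfolding \<delta>_def by simp
  have \<delta>small: "\<delta> * M0 * N \<le> \<alpha> / 2"
  proof -
    have "\<delta> \<le> \<alpha> / (2 * N * (M0 + 1))" unfolding \<delta>_def by simp
    then have "\<delta> * (2 * N * (M0 + 1)) \<le> \<alpha>" using N0 M00 by (simp add: pos_le_divide_eq)
    moreover have "\<delta> * M0 * N \<le> \<delta> * (M0 + 1) * N" using \<delta>0 N0 by simp
    ultimately show ?thesis by (simp add: algebra_simps)
  qed
  define d where "d a = \<delta> ^ idx a" for a :: 'n
  have d0: "d a > 0" for a unfolding d_def using \<delta>0 by simp
  have dn0: "d a \<noteq> 0" for a using d0[of a] by simp
  define K :: "complex^'n^'n" where "K = (\<chi> a b. T$a$b / complex_of_real (d a))"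
  define C :: "complex^'n^'n" where "C = (\<chi> a b. B$a$b * complex_of_real (d b) / complex_of_real (d a))"
  define Dm :: "complex^'n^'n" where "Dm = (\<chi> a b. if a = b then complex_of_real (d a) else 0)"
  have TF: "T ** cmat F = B ** T" unfolding FS using TS by (simp add: matrix_mul_assoc)
  have KF: "K ** cmat F = C ** K"
  proof -
    have 1: "(K ** cmat F)$a$b = (T ** cmat F)$a$b / complex_of_real (d a)" for a b
      by (simp add: K_def matrix_matrix_mult_def sum_divide_distrib)
    have 2: "(C ** K)$a$b = (B ** T)$a$b / complex_of_real (d a)" for a b
    proof -
      have "(C ** K)$a$b = (\<Sum>c\<in>UNIV. B$a$c * complex_of_real (d c) / complex_of_real (d a) * (T$c$b / complex_of_real (d c)))"
        by (simp add: C_def K_def matrix_matrix_mult_def)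
      also have "\<dots> = (\<Sum>c\<in>UNIV. B$a$c * T$c$b / complex_of_real (d a))"
        by (rule sum.cong[OF refl]) (rule frac_aux[OF dn0])
      also have "\<dots> = (B ** T)$a$b / complex_of_real (d a)"
        by (simp add: matrix_matrix_mult_def sum_divide_distrib)
      finally show ?thesis .
    qed
    show ?thesis unfolding Finite_Cartesian_Product.vec_eq_iff using 1 2 TF by simp
  qed
  have DK: "Dm ** K = T"
  proof -
    have "(Dm ** K)$a$b = T$a$b" for a b :: 'n
    proof -
      have "(Dm ** K)$a$b = (\<Sum>c\<in>UNIV. (if a = c then complex_of_real (d a) else 0) * (T$c$b / complex_of_real (d c)))"
        by (simp add: Dm_def K_def matrix_matrix_mult_def)
      also have "\<dots> = (\<Sum>c\<in>UNIV. if c = a then complex_of_real (d a) * (T$a$b / complex_of_real (d a)) else 0)"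
        by (rule sum.cong[OF refl]) auto
      also have "\<dots> = complex_of_real (d a) * (T$a$b / complex_of_real (d a))"
        by simp
      also have "\<dots> = T$a$b" using dn0[of a] by simp
      finally show ?thesis .
    qed
    then show ?thesis unfolding Finite_Cartesian_Product.vec_eq_iff by blast
  qed
  define G where "G = S ** Dm"
  have GK: "G ** K = Finite_Cartesian_Product.mat 1"
    unfolding G_def using ST DK by (simp add: matrix_mul_assoc[symmetric])
  have Cdiag: "Re (C$a$a) \<le> - \<alpha>" for a
    using \<alpha>le[of a] d0[of a] by (simp add: C_def)
  have Coff: "cmod (C$a$b) \<le> \<delta> * M0" if "a \<noteq> b" for a b
  proof (cases "idx b < idx a")
    case True
    then show ?thesis using tri \<delta>0 M00 by (simp add: C_def)
  next
    case False
    then have lt: "idx a < idx b" using that idx_inj[of a b] by linarith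
    have "cmod (C$a$b) = cmod (B$a$b) * (d b / d a)"
      using d0[of a] d0[of b] by (simp add: C_def norm_mult norm_divide)
    also have "d b / d a = \<delta> ^ (idx b - idx a)"
      unfolding d_def using \<delta>0 lt by (simp add: power_diff)
    also have "\<delta> ^ (idx b - idx a) \<le> \<delta> ^ 1"
      by (rule power_decreasing) (use lt \<delta>0 \<delta>1 in auto)
    finally have "cmod (C$a$b) \<le> cmod (B$a$b) * \<delta>"
      by (simp add: mult_left_mono)
    also have "\<dots> \<le> M0 * \<delta>" by (rule mult_right_mono[OF M0]) (use \<delta>0 in simp)
    finally show ?thesis by (simp add: mult.commute)
  qed
  have QB: "(\<Sum>a\<in>UNIV. \<Sum>b\<in>UNIV. Re (cnj (y$a) * C$a$b * y$b)) \<le> - (\<alpha>/2) * (\<Sum>a\<in>UNIV. (cmod (y$a))^2)" for y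
    by (rule quad_bound[of C \<alpha> "\<delta> * M0"]) (use Cdiag Coff \<delta>small \<delta>0 M00 in \<open>auto simp: N_def mult.commute mult.left_commute\<close>)
  obtain L where L0: "L > 0" and L: "\<And>y. norm (G *v y) \<le> norm y * L"
    using bounded_linear.pos_bounded[OF matrix_vector_mul_bounded_linear[of G]] by blast
  define P :: "real^'n^'n" where "P = (\<chi> i j. Re (\<Sum>a\<in>UNIV. cnj (K$a$i) * K$a$j))"
  define cv :: "real^'n \<Rightarrow> complex^'n" where "cv x = (\<chi> a. complex_of_real (x$a))" for x
  have cvF: "cv (F *v x) = cmat F *v cv x" for x
    unfolding Finite_Cartesian_Product.vec_eq_iff by (simp add: cv_def cmat_def matrix_vector_mult_def)
  have key: "x \<bullet> (P *v w) = (\<Sum>a\<in>UNIV. Re (cnj ((K *v cv x)$a) * (K *v cv w)$a))" for x w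
    unfolding P_def cv_def by (rule key_ident)
  have nx: "(norm x)^2 \<le> L^2 * (\<Sum>a\<in>UNIV. (cmod ((K *v cv x)$a))^2)" for x
  proof -
    have "(norm x)^2 = (norm (cv x))^2" by (simp add: norm_sq_cart cv_def)
    also have "cv x = G *v (K *v cv x)" by (simp add: matrix_vector_mul_assoc GK)
    also have "(norm (G *v (K *v cv x)))^2 \<le> (norm (K *v cv x) * L)^2"
      by (rule power_mono[OF L]) simp
    also have "\<dots> = L^2 * (\<Sum>a\<in>UNIV. (cmod ((K *v cv x)$a))^2)"
      by (simp add: power_mult_distrib norm_sq_cart)
    finally show ?thesis .
  qed
  have form1: "x \<bullet> (P *v x) = (\<Sum>a\<in>UNIV. (cmod ((K *v cv x)$a))^2)" for x
    unfolding key by (rule sum.cong[OF refl]) (rule re_cnj_sq)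
  have form2: "x \<bullet> (P *v (F *v x)) = (\<Sum>a\<in>UNIV. \<Sum>b\<in>UNIV. Re (cnj ((K *v cv x)$a) * C$a$b * (K *v cv x)$b))" for x
  proof -
    have "K *v cv (F *v x) = C *v (K *v cv x)"
      by (simp add: cvF matrix_vector_mul_assoc KF)
    then show ?thesis unfolding key
      by (simp add: matrix_vector_mult_def sum_distrib_left mult.assoc)
  qed
  show ?thesis
  proof (intro exI conjI allI impI)
    show "sym_mat P" unfolding sym_mat_def P_def transpose_def Finite_Cartesian_Product.vec_eq_iff
      by (simp add: algebra_simps)
    show "0 < \<alpha> / (2 * L^2)" using \<alpha>0 L0 by simp
  next
    fix x :: "real^'n" assume "x \<noteq> 0"
    then have "(norm x)^2 > 0" by simp
    then have "L^2 * (\<Sum>a\<in>UNIV. (cmod ((K *v cv x)$a))^2) > 0" using nx[of x] by linarith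
    then show "x \<bullet> (P *v x) > 0" unfolding form1 using L0 by (simp add: zero_less_mult_iff)
  next
    fix x :: "real^'n"
    define Y where "Y = (\<Sum>a\<in>UNIV. (cmod ((K *v cv x)$a))^2)"
    have "x \<bullet> (P *v (F *v x)) \<le> - (\<alpha>/2) * Y" unfolding form2 Y_def by (rule QB)
    also have "\<dots> \<le> - (\<alpha> / (2 * L^2)) * (norm x)^2"
    proof -
      have "(norm x)^2 \<le> L^2 * Y" using nx[of x] unfolding Y_def .
      then have "(norm x)^2 / L^2 \<le> Y" using L0 by (simp add: divide_le_eq mult.commute)
      then have "(\<alpha>/2) * ((norm x)^2 / L^2) \<le> (\<alpha>/2) * Y" using \<alpha>0 by (intro mult_left_mono) auto
      then show ?thesis by (simp add: field_simps)
    qed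
    finally show "x \<bullet> (P *v (F *v x)) \<le> - (\<alpha> / (2 * L^2)) * (norm x)^2" .
  qed
qed




lemma sum3: "sum f (UNIV::('n::finite + ('n + 'n)) set) =
   sum (\<lambda>a. f (Inl a)) UNIV + sum (\<lambda>a. f (Inr (Inl a))) UNIV + sum (\<lambda>a. f (Inr (Inr a))) UNIV"
proof -
  have "sum f (UNIV::('n + ('n + 'n)) set) = sum f (UNIV <+> (UNIV <+> UNIV))" by simp
  also have "\<dots> = sum (\<lambda>a. f (Inl a)) UNIV + sum (f \<circ> Inr) (UNIV <+> UNIV)"
    by (subst sum.Plus) (auto simp: comp_def)
  also have "sum (f \<circ> Inr) (UNIV <+> UNIV :: ('n + 'n) set) = sum (\<lambda>a. f (Inr (Inl a))) UNIV + sum (\<lambda>a. f (Inr (Inr a))) UNIV"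
    by (subst sum.Plus) (auto simp: comp_def)
  finally show ?thesis by (simp add: add.assoc)
qed

lemma blk3_quad:
  fixes v :: "real^('n::finite + ('n + 'n))"
  defines "x \<equiv> (\<chi> a. v $ Inl a)" and "y \<equiv> (\<chi> a. v $ Inr (Inl a))" and "w \<equiv> (\<chi> a. v $ Inr (Inr a))"
  shows "v \<bullet> (blk3 A11 A12 A13 A21 A22 A23 A31 A32 A33 *v v) =
    x \<bullet> (A11 *v x) + x \<bullet> (A12 *v y) + x \<bullet> (A13 *v w) +
    y \<bullet> (A21 *v x) + y \<bullet> (A22 *v y) + y \<bullet> (A23 *v w) +
    w \<bullet> (A31 *v x) + w \<bullet> (A32 *v y) + w \<bullet> (A33 *v w)"
  unfolding x_def y_def w_def
  by (simp add: inner_vec_def matrix_vector_mult_def blk3_def sum3 distrib_left sum.distrib)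

lemma blk3_nz:
  fixes v :: "real^('n::finite + ('n + 'n))"
  assumes "v \<noteq> 0"
  shows "(\<chi> a. v $ Inl a) \<noteq> 0 \<or> (\<chi> a. v $ Inr (Inl a)) \<noteq> (0::real^'n) \<or> (\<chi> a. v $ Inr (Inr a)) \<noteq> (0::real^'n)"
proof (rule ccontr)
  assume "\<not> ?thesis"
  then have h: "v $ Inl a = 0" "v $ Inr (Inl a) = 0" "v $ Inr (Inr a) = 0" for a
    by (auto simp: Finite_Cartesian_Product.vec_eq_iff)
  have "v = 0" unfolding Finite_Cartesian_Product.vec_eq_iff
  proof
    fix i
    show "v $ i = 0 $ i"
    proof (cases i)
      case (Inl a) then show ?thesis using h by simp
    next
      case (Inr j) then show ?thesis using h by (cases j) auto
    qed
  qed
  then show False using assms by simp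
qed

lemma blk3_sym:
  assumes "transpose A11 = A11" "transpose A22 = A22" "transpose A33 = A33"
    "A21 = transpose A12" "A31 = transpose A13" "A32 = transpose A23"
  shows "sym_mat (blk3 A11 A12 A13 A21 A22 A23 A31 A32 A33)"
proof -
  have e: "A11$b$a = A11$a$b" "A22$b$a = A22$a$b" "A33$b$a = A33$a$b"
    "A21$b$a = A12$a$b" "A31$b$a = A13$a$b" "A32$b$a = A23$a$b" for a b
    using assms by (auto simp: transpose_def Finite_Cartesian_Product.vec_eq_iff dest!: arg_cong[where f="\<lambda>M. M$a$b"])
  show ?thesis unfolding sym_mat_def transpose_def Finite_Cartesian_Product.vec_eq_iff
    by (auto simp: blk3_def e split: sum.splits)
qed

lemma amgm:
  fixes a cc b u v :: real
  assumes "0 \<le> a" "0 \<le> cc" "b^2 \<le> 4*a*cc"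
  shows "b * u * v \<le> a*u^2 + cc * v^2"
proof (cases "a = 0")
  case True
  then have "b^2 \<le> 0" using assms by simp
  then have "b = 0" by simp
  then show ?thesis using assms by simp
next
  case False
  then have a0: "a > 0" using assms by simp
  have "4*a*(a*u^2 + cc * v^2 - b * u * v) = (2*a*u - b * v)^2 + (4*a*cc - b^2) * v^2"
    by (simp add: algebra_simps power2_eq_square)
  also have "\<dots> \<ge> 0" using assms by simp
  finally have "0 \<le> 4*a*(a*u^2 + cc * v^2 - b * u * v)" .
  then have "0 \<le> a*u^2 + cc * v^2 - b * u * v" using a0 by (simp add: zero_le_mult_iff)
  then show ?thesis by simp
qed

lemma final_real:
  fixes X Y W c eps h p f g k E e2 Q :: real
  assumes nn: "X \<ge> 0" "Y \<ge> 0" "W \<ge> 0" and pos: "c > 0" "eps > 0" "h > 0" "p > 0" "f > 0" "g > 0" "e2 > 0"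
    and k: "0 \<le> k" "2*k*p \<le> c/2" and h1: "h \<le> eps/2" and ef: "4*eps*f^2 = c"
    and h2: "h*(8*p^2*g^2) \<le> c*e2" and h3: "h*(8*eps*g^2) \<le> e2" and E: "E \<ge> e2"
    and Q: "Q \<le> 2*k*(p*X^2) - 2*c*X^2 + 2*eps*(f*X*Y) + 2*h*(p*X*(g*W)) + (h-2*eps)*Y^2
              + 2*h*eps*(Y*(g*W)) - h*E*W^2"
  shows "Q \<le> -(c/2)*X^2 - (eps/2)*Y^2 - (h*e2/2)*W^2"
proof -
  have t1: "(2*eps*f)*X*Y \<le> (c/2)*X^2 + (eps/2)*Y^2"
  proof (rule amgm)
    have "(2*eps*f)^2 = eps * (4*eps*f^2)" by (simp add: power2_eq_square)
    also have "\<dots> = 4*(c/2)*(eps/2)" using ef by simp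
    finally show "(2*eps*f)^2 \<le> 4*(c/2)*(eps/2)" by simp
  qed (use pos in auto)
  have t2: "(2*h*p*g)*X*W \<le> (c/2)*X^2 + (h*e2/4)*W^2"
  proof (rule amgm)
    have "(2*h*p*g)^2 = (h/2) * (h*(8*p^2*g^2))" by (simp add: power2_eq_square)
    also have "\<dots> \<le> (h/2) * (c*e2)" using h2 pos by (intro mult_left_mono) auto
    also have "\<dots> = 4*(c/2)*(h*e2/4)" by simp
    finally show "(2*h*p*g)^2 \<le> 4*(c/2)*(h*e2/4)" .
  qed (use pos in auto)
  have t3: "(2*h*eps*g)*Y*W \<le> (eps/2)*Y^2 + (h*e2/4)*W^2"
  proof (rule amgm)
    have "(2*h*eps*g)^2 = (h*eps/2) * (h*(8*eps*g^2))" by (simp add: power2_eq_square)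
    also have "\<dots> \<le> (h*eps/2) * e2" using h3 pos by (intro mult_left_mono) auto
    also have "\<dots> = 4*(eps/2)*(h*e2/4)" by simp
    finally show "(2*h*eps*g)^2 \<le> 4*(eps/2)*(h*e2/4)" .
  qed (use pos in auto)
  have t4: "2*k*(p*X^2) \<le> (c/2)*X^2"
    using mult_right_mono[OF k(2), of "X^2"] by (simp add: algebra_simps)
  have t5: "h*E*W^2 \<ge> h*e2*W^2"
    using pos E by (intro mult_right_mono mult_left_mono) auto
  have t6: "h*Y^2 \<le> (eps/2)*Y^2" using h1 by (intro mult_right_mono) auto
  show ?thesis using Q t1 t2 t3 t4 t5 t6 by (simp add: algebra_simps)
qed





lemma transpose_add: "transpose (A + B) = transpose A + (transpose B :: 'a::plus^'n^'m)"
  by (simp add: transpose_def Finite_Cartesian_Product.vec_eq_iff)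
lemma transpose_diff: "transpose (A - B) = transpose A - (transpose B :: 'a::minus^'n^'m)"
  by (simp add: transpose_def Finite_Cartesian_Product.vec_eq_iff)
lemma transpose_uminus: "transpose (- A) = - (transpose A :: 'a::uminus^'n^'m)"
  by (simp add: transpose_def Finite_Cartesian_Product.vec_eq_iff)

lemma mv_uminus: "(- A) *v z = - (A *v (z::'a::ring_1^'n::finite))"
  by (simp add: Finite_Cartesian_Product.vec_eq_iff matrix_vector_mult_def sum_negf)

lemma inner_times2: "(u::real^'n::finite) \<bullet> (v * 2) = u \<bullet> v * 2"
proof -
  have "v * 2 = 2 *\<^sub>R v" by (simp add: Finite_Cartesian_Product.vec_eq_iff)
  then show ?thesis by simp
qed

lemma inner_transpose: "(u::real^'n::finite) \<bullet> (transpose A *v v) = (A *v u) \<bullet> v"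
  by (simp add: dot_lmul_matrix[symmetric] inner_commute)

theorem lemma6:
  fixes F G :: "real^'n^'n"
  assumes "hurwitz F"
  shows "\<exists>hM \<kappa> P1 Q P2 P3. hM > 0 \<and> \<kappa> > 0 \<and> pos_def P1 \<and> pos_def Q \<and>
           neg_def (Theta F G P1 Q P2 P3 hM 0) \<and> neg_def (Theta F G P1 Q P2 P3 hM \<kappa>)"
proof -
  obtain P c where sym: "sym_mat P" and pd: "\<And>x. x \<noteq> 0 \<Longrightarrow> x \<bullet> (P *v x) > 0" and c0: "c > 0"
    and neg: "\<And>x. x \<bullet> (P *v (F *v x)) \<le> - c * (norm x)^2"
    using lyap[OF assms] by blast
  have PT: "transpose P = P" using sym unfolding sym_mat_def .
  obtain p where p0: "p > 0" and pb: "\<And>x. norm (P *v x) \<le> norm x * p"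
    using bounded_linear.pos_bounded[OF matrix_vector_mul_bounded_linear[of P]] by blast
  obtain f where f0: "f > 0" and fb: "\<And>x. norm (F *v x) \<le> norm x * f"
    using bounded_linear.pos_bounded[OF matrix_vector_mul_bounded_linear[of F]] by blast
  obtain g where g0: "g > 0" and gb: "\<And>x. norm (G *v x) \<le> norm x * g"
    using bounded_linear.pos_bounded[OF matrix_vector_mul_bounded_linear[of G]] by blast
  define e2 where "e2 = exp (-2::real)"
  have e20: "e2 > 0" unfolding e2_def by simp
  define \<epsilon> where "\<epsilon> = c / (4 * f^2)"
  have \<epsilon>0: "\<epsilon> > 0" unfolding \<epsilon>_def using c0 f0 by simp
  define h where "h = min (min (\<epsilon>/2) (c*e2/(8*p^2*g^2))) (min (e2/(8*\<epsilon>*g^2)) 1)"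
  have h0: "h > 0" unfolding h_def using \<epsilon>0 c0 e20 p0 g0 by simp
  have h1: "h \<le> \<epsilon>/2" "h \<le> 1" unfolding h_def by auto
  have h2: "h*(8*p^2*g^2) \<le> c*e2"
  proof -
    have "h \<le> c*e2/(8*p^2*g^2)" unfolding h_def by auto
    then show ?thesis using p0 g0 by (simp add: pos_le_divide_eq)
  qed
  have h3: "h*(8*\<epsilon>*g^2) \<le> e2"
  proof -
    have "h \<le> e2/(8*\<epsilon>*g^2)" unfolding h_def by auto
    then show ?thesis using \<epsilon>0 g0 by (simp add: pos_le_divide_eq)
  qed
  have ef: "4*\<epsilon>*f^2 = c" unfolding \<epsilon>_def using f0 by simp
  define \<kappa> where "\<kappa> = min 1 (c / (4*p))"
  have \<kappa>0: "\<kappa> > 0" unfolding \<kappa>_def using c0 p0 by simp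
  have \<kappa>1: "\<kappa> \<le> 1" "2*\<kappa>*p \<le> c/2"
  proof -
    show "\<kappa> \<le> 1" unfolding \<kappa>_def by simp
    have "\<kappa> \<le> c/(4*p)" unfolding \<kappa>_def by simp
    then show "2*\<kappa>*p \<le> c/2" using p0 by (simp add: pos_le_divide_eq field_simps)
  qed
  define I :: "real^'n^'n" where "I = Finite_Cartesian_Product.mat 1"
  define P3 where "P3 = \<epsilon> *\<^sub>R I"
  have posP: "pos_def P" unfolding pos_def_def using sym pd by blast
  have posI: "pos_def I" unfolding pos_def_def sym_mat_def I_def
    by (simp add: power2_norm_eq_inner[symmetric])
  have main: "neg_def (Theta F G P I P P3 h k)" if k: "0 \<le> k" "k \<le> \<kappa>" for k
  proof -
    have P3T: "transpose P3 = P3" unfolding P3_def I_def by (simp add: transpose_scalar)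
    have P3v: "P3 *v z = \<epsilon> *\<^sub>R z" for z
      unfolding P3_def I_def by (simp add: scaleR_matrix_vector_assoc[symmetric])
    have Iv: "I *v z = z" for z unfolding I_def by simp
    have sP: "(P *v a) \<bullet> b = a \<bullet> (P *v b)" for a b
      using inner_transpose[of a P b] PT by simp
    have symT: "sym_mat (Theta F G P I P P3 h k)"
      unfolding Theta_def
      apply (rule blk3_sym)
      apply (simp_all only: transpose_add transpose_diff transpose_uminus transpose_scalar
          matrix_transpose_mul PT P3T transpose_transpose I_def transpose_mat)
      apply (simp_all add: add_ac)
      done
    have quad: "v \<bullet> (Theta F G P I P P3 h k *v v) < 0" if v: "v \<noteq> 0" for v
    proof -
      define x where "x = (\<chi> a. v $ Inl a)"
      define y where "y = (\<chi> a. v $ Inr (Inl a))"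
      define w where "w = (\<chi> a. v $ Inr (Inr a))"
      define E where "E = exp (-2 * k * h)"
      have Qeq: "v \<bullet> (Theta F G P I P P3 h k *v v) =
         2*k*(x \<bullet> (P *v x)) + 2*(x \<bullet> (P *v (F *v x))) + 2*\<epsilon>*((F *v x) \<bullet> y)
         + 2*h*((P *v x) \<bullet> (G *v w)) + (h - 2*\<epsilon>)*(y \<bullet> y) + 2*h*\<epsilon>*(y \<bullet> (G *v w)) - h*E*(w \<bullet> w)"
      proof -
        have s1: "(F *v x) \<bullet> (P *v x) = x \<bullet> (P *v (F *v x))"
          using sP[of x "F *v x"] by (simp add: inner_commute)
        have s2: "x \<bullet> (P *v (G *v w)) = (P *v x) \<bullet> (G *v w)" by (simp add: sP)
        have s3: "(G *v w) \<bullet> (P *v x) = (P *v x) \<bullet> (G *v w)" by (simp add: inner_commute)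
        have s4: "y \<bullet> (F *v x) = (F *v x) \<bullet> y" by (simp add: inner_commute)
        have s5: "(G *v w) \<bullet> y = y \<bullet> (G *v w)" by (simp add: inner_commute)
        show ?thesis
          unfolding Theta_def blk3_quad x_def[symmetric] y_def[symmetric] w_def[symmetric] E_def
          apply (simp only: matrix_vector_mult_add_rdistrib matrix_vector_mult_diff_rdistrib mv_uminus
            matrix_vector_mul_assoc[symmetric] scaleR_matrix_vector_assoc[symmetric] P3v P3T PT Iv)
          apply (simp add: matrix_vector_mult_scaleR inner_add_right inner_diff_right inner_scaleR_right
            inner_minus_right inner_transpose s1 s2 s3 s4 s5 inner_times2 algebra_simps del: transpose_matrix_vector)
          done
      qed
      define X where "X = norm x"
      define Y where "Y = norm y"
      define W where "W = norm w"
      have b1: "x \<bullet> (P *v x) \<le> p * X^2"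
      proof -
        have "x \<bullet> (P *v x) \<le> norm x * norm (P *v x)" by (rule norm_cauchy_schwarz)
        also have "\<dots> \<le> norm x * (norm x * p)" by (rule mult_left_mono[OF pb]) simp
        finally show ?thesis unfolding X_def by (simp add: power2_eq_square algebra_simps)
      qed
      have b2: "x \<bullet> (P *v (F *v x)) \<le> - c * X^2" unfolding X_def by (rule neg)
      have b3: "(F *v x) \<bullet> y \<le> f * X * Y"
      proof -
        have "(F *v x) \<bullet> y \<le> norm (F *v x) * norm y" by (rule norm_cauchy_schwarz)
        also have "\<dots> \<le> (norm x * f) * norm y" by (rule mult_right_mono[OF fb]) simp
        finally show ?thesis unfolding X_def Y_def by (simp add: algebra_simps)
      qed
      have b4: "(P *v x) \<bullet> (G *v w) \<le> p * X * (g * W)"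
      proof -
        have "(P *v x) \<bullet> (G *v w) \<le> norm (P *v x) * norm (G *v w)" by (rule norm_cauchy_schwarz)
        also have "\<dots> \<le> (norm x * p) * (norm w * g)" by (rule mult_mono[OF pb gb]) (use p0 in auto)
        finally show ?thesis unfolding X_def W_def by (simp add: algebra_simps)
      qed
      have b5: "y \<bullet> (G *v w) \<le> Y * (g * W)"
      proof -
        have "y \<bullet> (G *v w) \<le> norm y * norm (G *v w)" by (rule norm_cauchy_schwarz)
        also have "\<dots> \<le> norm y * (norm w * g)" by (rule mult_left_mono[OF gb]) simp
        finally show ?thesis unfolding Y_def W_def by (simp add: algebra_simps)
      qed
      have yy: "y \<bullet> y = Y^2" unfolding Y_def by (simp add: power2_norm_eq_inner)
      have ww: "w \<bullet> w = W^2" unfolding W_def by (simp add: power2_norm_eq_inner)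
      have E: "E \<ge> e2"
      proof -
        have "k * h \<le> 1 * 1" using k \<kappa>1 h1 h0 by (intro mult_mono) auto
        then have "-2 \<le> -2 * k * h" by simp
        then show ?thesis unfolding E_def e2_def by simp
      qed
      define Q where "Q = v \<bullet> (Theta F G P I P P3 h k *v v)"
      have Qb: "Q \<le> 2*k*(p*X^2) - 2*c*X^2 + 2*\<epsilon>*(f*X*Y) + 2*h*(p*X*(g*W)) + (h-2*\<epsilon>)*Y^2
              + 2*h*\<epsilon>*(Y*(g*W)) - h*E*W^2"
      proof -
        have "2*k*(x \<bullet> (P *v x)) \<le> 2*k*(p*X^2)" using b1 k by (intro mult_left_mono) auto
        moreover have "2*\<epsilon>*((F *v x) \<bullet> y) \<le> 2*\<epsilon>*(f*X*Y)" using b3 \<epsilon>0 by (intro mult_left_mono) auto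
        moreover have "2*h*((P *v x) \<bullet> (G *v w)) \<le> 2*h*(p*X*(g*W))" using b4 h0 by (intro mult_left_mono) auto
        moreover have "2*h*\<epsilon>*(y \<bullet> (G *v w)) \<le> 2*h*\<epsilon>*(Y*(g*W))" using b5 h0 \<epsilon>0 by (intro mult_left_mono) auto
        ultimately show ?thesis unfolding Q_def Qeq yy ww using b2 by linarith
      qed
      have kp: "2*k*p \<le> c/2"
      proof -
        have "k*p \<le> \<kappa>*p" using k p0 by (intro mult_right_mono) auto
        then show ?thesis using \<kappa>1(2) by linarith
      qed
      have fin: "Q \<le> -(c/2)*X^2 - (\<epsilon>/2)*Y^2 - (h*e2/2)*W^2"
        by (rule final_real[OF _ _ _ c0 \<epsilon>0 h0 p0 f0 g0 e20 k(1) kp h1(1) ef h2 h3 E Qb])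
           (auto simp: X_def Y_def W_def)
      have "x \<noteq> 0 \<or> y \<noteq> 0 \<or> w \<noteq> 0" using blk3_nz[OF v] unfolding x_def y_def w_def .
      then have "X^2 > 0 \<or> Y^2 > 0 \<or> W^2 > 0" unfolding X_def Y_def W_def by auto
      then have "(c/2)*X^2 > 0 \<or> (\<epsilon>/2)*Y^2 > 0 \<or> (h*e2/2)*W^2 > 0"
        using c0 \<epsilon>0 h0 e20 by auto
      moreover have "(c/2)*X^2 \<ge> 0" "(\<epsilon>/2)*Y^2 \<ge> 0" "(h*e2/2)*W^2 \<ge> 0"
        using c0 \<epsilon>0 h0 e20 by auto
      ultimately have "-(c/2)*X^2 - (\<epsilon>/2)*Y^2 - (h*e2/2)*W^2 < 0" by linarith
      then show ?thesis using fin unfolding Q_def by linarith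
    qed
    show ?thesis unfolding neg_def_def using symT quad by blast
  qed
  show ?thesis
    by (rule exI[of _ h], rule exI[of _ \<kappa>], rule exI[of _ P], rule exI[of _ I], rule exI[of _ P],
        rule exI[of _ P3]) (use h0 \<kappa>0 posP posI main[of 0] main[of \<kappa>] in auto)
qed


end
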